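(* Fix $-1 \leq a < 1$ and let $\mathfrak{g} = \mathfrak{r}_{3,a}$, the three-dimensional Lie algebra with basis $\{e_1,e_2,e_3\}$ and nonzero brackets $[e_1,e_2]=e_2$, $[e_1,e_3]=ae_3$. For every inner product $\langle\cdot,\cdot\rangle$ on $\mathfrak{g}$, there exist $\lambda \in \mathbb{R}$, $k > 0$, and an orthonormal basis $\{x_1, x_2, x_3\}$ with respect to $k \langle\cdot,\cdot\rangle$ such that the bracket relations are given by \[ [x_1 , x_2] = x_2 + \lambda (a-1)x_3 , \quad [x_1 , x_3] = a x_3 \] (and $[x_2,x_3]=0$). Furthermore, the matrix expression of the derivation algebra $\mathrm{Der}(\mathfrak{g})$ with respect to $\{x_1, x_2, x_3\}$ coincides with \[ \left\{ \begin{pmatrix} 0 & 0 & 0 \\ x_{21} & x_{22} & 0 \\ x_{31} & \lambda (x_{33} - x_{22}) & x_{33} \end{pmatrix} \;\middle|\; x_{21}, x_{22}, x_{31}, x_{33} \in \mathbb{R} \right\}. \] *)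

theory Defs
  imports "HOL-Analysis.Analysis"
begin

text \<open>The Lie algebra r_{3,a} is modelled on real^3, vectors being coordinate
  vectors with respect to the basis e1, e2, e3 (the standard basis).
  Its bracket is the bilinear extension of [e1,e2] = e2, [e1,e3] = a e3,
  [e2,e3] = 0.\<close>

definition r3_bracket :: "real \<Rightarrow> real^3 \<Rightarrow> real^3 \<Rightarrow> real^3" where
  "r3_bracket a u v =
     vector [0, u$1 * v$2 - u$2 * v$1, a * (u$1 * v$3 - u$3 * v$1)]"

definition is_inner_product :: "('v::real_vector \<Rightarrow> 'v \<Rightarrow> real) \<Rightarrow> bool" where
  "is_inner_product ip \<longleftrightarrow> bilinear ip \<and> (\<forall>u v. ip u v = ip v u) \<and> (\<forall>u. u \<noteq> 0 \<longrightarrow> ip u u > 0)"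

definition derivations :: "('v::real_vector \<Rightarrow> 'v \<Rightarrow> 'v) \<Rightarrow> ('v \<Rightarrow> 'v) set" where
  "derivations br = {D. linear D \<and> (\<forall>u v. D (br u v) = br (D u) v + br u (D v))}"

definition matrix_wrt :: "(3 \<Rightarrow> real^3) \<Rightarrow> (real^3 \<Rightarrow> real^3) \<Rightarrow> real^3^3 \<Rightarrow> bool" where
  "matrix_wrt x D M \<longleftrightarrow> (\<forall>j. D (x j) = (\<Sum>i\<in>UNIV. (M$i$j) *\<^sub>R x i))"

end

theory Submission imports Defs begin
lemma br_comp: "r3_bracket a u v $ 1 = 0" "r3_bracket a u v $ 2 = u$1 * v$2 - u$2 * v$1"
  "r3_bracket a u v $ 3 = a * (u$1 * v$3 - u$3 * v$1)"
  by (simp_all add: r3_bracket_def)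

lemma der_char:
  assumes a1: "a \<noteq> 1" and D: "D \<in> derivations (r3_bracket a)"
  shows "\<exists>p2 p3 q2 r3. \<forall>v. D v = vector [0, p2 * v$1 + q2 * v$2, p3 * v$1 + r3 * v$3]"
proof -
  define e1 :: "real^3" where "e1 = vector [1,0,0]"
  define e2 :: "real^3" where "e2 = vector [0,1,0]"
  define e3 :: "real^3" where "e3 = vector [0,0,1]"
  have lin: "linear D" and der: "\<And>u v. D (r3_bracket a u v) = r3_bracket a (D u) v + r3_bracket a u (D v)"
    using D by (auto simp: derivations_def)
  have b12: "r3_bracket a e1 e2 = e2" by (simp add: vec_eq_iff forall_3 br_comp e1_def e2_def)
  have b13: "r3_bracket a e1 e3 = a *\<^sub>R e3" by (simp add: vec_eq_iff forall_3 br_comp e1_def e3_def)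
  have b23: "r3_bracket a e2 e3 = 0" by (simp add: vec_eq_iff forall_3 br_comp e2_def e3_def)
  have d12: "D e2 = r3_bracket a (D e1) e2 + r3_bracket a e1 (D e2)" using der[of e1 e2] b12 by simp
  have d13: "a *\<^sub>R D e3 = r3_bracket a (D e1) e3 + r3_bracket a e1 (D e3)" using der[of e1 e3] b13
    by (simp add: linear_scale[OF lin])
  have d23: "0 = r3_bracket a (D e2) e3 + r3_bracket a e2 (D e3)" using der[of e2 e3] b23
    by (simp add: linear_0[OF lin])
  from d12 have "D e2 $ 1 = 0" "D e1 $ 1 = 0" "D e2 $ 3 = a * D e2 $ 3"
    by (auto simp: vec_eq_iff forall_3 br_comp e1_def e2_def)
  moreover from d13 have "a * D e3 $ 2 = D e3 $ 2"
    by (auto simp: vec_eq_iff forall_3 br_comp e1_def e3_def)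
  moreover from d23 have "D e3 $ 1 = 0"
    by (auto simp: vec_eq_iff forall_3 br_comp e2_def e3_def)
  ultimately have z: "D e1 $ 1 = 0" "D e2 $ 1 = 0" "D e2 $ 3 = 0" "D e3 $ 1 = 0" "D e3 $ 2 = 0"
    using a1 by (auto simp: algebra_simps)
  have dec: "\<And>v. v = v$1 *\<^sub>R e1 + v$2 *\<^sub>R e2 + v$3 *\<^sub>R e3"
    by (simp add: vec_eq_iff forall_3 e1_def e2_def e3_def)
  have Dv: "\<And>v. D v = v$1 *\<^sub>R D e1 + v$2 *\<^sub>R D e2 + v$3 *\<^sub>R D e3"
    by (subst dec, simp add: linear_add[OF lin] linear_scale[OF lin])
  show ?thesis
    apply (rule exI[of _ "D e1 $ 2"], rule exI[of _ "D e1 $ 3"], rule exI[of _ "D e2 $ 2"], rule exI[of _ "D e3 $ 3"])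
    apply (intro allI)
    apply (subst Dv)
    using z by (simp add: vec_eq_iff forall_3 algebra_simps)
qed
lemma three_ne: "(2::3) \<noteq> 1" "(3::3) \<noteq> 1" "(3::3) \<noteq> 2" "(1::3) \<noteq> 2" "(1::3) \<noteq> 3" "(2::3) \<noteq> 3"
  by simp_all

lemma der_set:
  fixes b c s2 t s3 a :: real
  assumes a1: "a \<noteq> 1" and s2: "s2 \<noteq> 0" and s3: "s3 \<noteq> 0"
  and xdef: "x = (\<lambda>i::3. if i = 1 then vector [1,b,c] else if i = 2 then vector [0,s2,s2*t] else vector [0,0,s3])"
  and lam: "lam = s2*t/s3"
  shows "{M. \<exists>D\<in>derivations (r3_bracket a). matrix_wrt x D M} =
           {M. \<exists>x21 x22 x31 x33.
                 M = vector [vector [0, 0, 0],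
                             vector [x21, x22, 0],
                             vector [x31, lam * (x33 - x22), x33]]}"
proof (intro set_eqI iffI; clarsimp)
  fix M D assume D: "D \<in> derivations (r3_bracket a)" and mw: "matrix_wrt x D M"
  obtain p2 p3 q2 r3 where Dv: "\<And>v. D v = vector [0, p2 * v$1 + q2 * v$2, p3 * v$1 + r3 * v$3]"
    using der_char[OF a1 D] by blast
  have mj: "\<And>j. D (x j) = M$1$j *\<^sub>R x 1 + M$2$j *\<^sub>R x 2 + M$3$j *\<^sub>R x 3"
    using mw by (simp add: matrix_wrt_def sum_3)
  have e1: "0 = M$1$1" "p2 + q2 * b = M$1$1 * b + M$2$1 * s2" "p3 + r3 * c = M$1$1 * c + M$2$1 * s2 * t + M$3$1 * s3"
    using mj[of 1] by (simp_all add: vec_eq_iff forall_3 xdef Dv three_ne)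
  have e2: "0 = M$1$2" "q2 * s2 = M$1$2 * b + M$2$2 * s2" "r3 * s2 * t = M$1$2 * c + M$2$2 * s2 * t + M$3$2 * s3"
    using mj[of 2] by (auto simp add: vec_eq_iff forall_3 xdef Dv three_ne algebra_simps)
  have e3: "0 = M$1$3" "0 = M$1$3 * b + M$2$3 * s2" "r3 * s3 = M$1$3 * c + M$2$3 * s2 * t + M$3$3 * s3"
    using mj[of 3] by (auto simp add: vec_eq_iff forall_3 xdef Dv three_ne algebra_simps)
  have m22: "M$2$2 = q2" using e2 s2 by simp
  have m23: "M$2$3 = 0" using e3 s2 by simp
  have m33: "M$3$3 = r3" using e3 m23 s3 by simp
  have m32: "M$3$2 = lam * (M$3$3 - M$2$2)"
    using e2 m22 m33 s3 unfolding lam by (simp add: field_simps)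
  show "\<exists>x21 x22 x31 x33. M = vector [vector [0, 0, 0], vector [x21, x22, 0], vector [x31, lam * (x33 - x22), x33]]"
    apply (rule exI[of _ "M$2$1"], rule exI[of _ "M$2$2"], rule exI[of _ "M$3$1"], rule exI[of _ "M$3$3"])
    using e1(1) e2(1) e3(1) m23 m32 by (simp add: vec_eq_iff forall_3)
next
  fix x21 x22 x31 x33
  define d21 where "d21 = x21 * s2 - x22 * b"
  define d31 where "d31 = x21 * s2 * t + x31 * s3 - x33 * c"
  define D where "D = (\<lambda>v::real^3. vector [0, d21 * v$1 + x22 * v$2, d31 * v$1 + x33 * v$3] :: real^3)"
  have lin: "linear D"
    by (rule linearI) (simp_all add: D_def vec_eq_iff forall_3 algebra_simps)
  have "D \<in> derivations (r3_bracket a)"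
    unfolding derivations_def using lin
    by (simp add: D_def vec_eq_iff forall_3 br_comp algebra_simps)
  moreover have "matrix_wrt x D (vector [vector [0, 0, 0], vector [x21, x22, 0], vector [x31, lam * (x33 - x22), x33]])"
    unfolding matrix_wrt_def forall_3 sum_3
    using s3 by (simp add: D_def xdef three_ne vec_eq_iff forall_3 d21_def d31_def lam field_simps)
  ultimately show "\<exists>D\<in>derivations (r3_bracket a). matrix_wrt x D (vector [vector [0, 0, 0], vector [x21, x22, 0], vector [x31, lam * (x33 - x22), x33]])"
    by blast
qed

theorem proposition4p8:
  fixes a :: real and ip :: "real^3 \<Rightarrow> real^3 \<Rightarrow> real"
  assumes "-1 \<le> a" and "a < 1" and "is_inner_product ip"
  shows "\<exists>lam k (x :: 3 \<Rightarrow> real^3).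
           k > 0 \<and>
           (\<forall>i j. k * ip (x i) (x j) = (if i = j then 1 else 0)) \<and>
           r3_bracket a (x 1) (x 2) = x 2 + (lam * (a - 1)) *\<^sub>R x 3 \<and>
           r3_bracket a (x 1) (x 3) = a *\<^sub>R x 3 \<and>
           r3_bracket a (x 2) (x 3) = 0 \<and>
           {M. \<exists>D\<in>derivations (r3_bracket a). matrix_wrt x D M} =
           {M. \<exists>x21 x22 x31 x33.
                 M = vector [vector [0, 0, 0],
                             vector [x21, x22, 0],
                             vector [x31, lam * (x33 - x22), x33]]}"
proof -
  have B: "bilinear ip" and S: "\<And>u v. ip u v = ip v u" and P: "\<And>u. u \<noteq> 0 \<Longrightarrow> ip u u > 0"
    using assms(3) by (auto simp: is_inner_product_def)
  note bl = bilinear_ladd[OF B] bilinear_radd[OF B] bilinear_lmul[OF B] bilinear_rmul[OF B]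
    bilinear_lsub[OF B] bilinear_rsub[OF B]
  have a1: "a \<noteq> 1" using assms(2) by simp
  define e1 :: "real^3" where "e1 = vector [1,0,0]"
  define e2 :: "real^3" where "e2 = vector [0,1,0]"
  define f3 :: "real^3" where "f3 = vector [0,0,1]"
  define N3 where "N3 = ip f3 f3"
  have N3: "N3 > 0" unfolding N3_def by (rule P) (simp add: f3_def vec_eq_iff forall_3)
  define \<tau> where "\<tau> = ip e2 f3 / N3"
  define f2 where "f2 = e2 - \<tau> *\<^sub>R f3"
  have o23: "ip f2 f3 = 0" using N3 by (simp add: f2_def bl \<tau>_def N3_def)
  define N2 where "N2 = ip f2 f2"
  have N2: "N2 > 0" unfolding N2_def by (rule P) (simp add: f2_def e2_def f3_def vec_eq_iff forall_3)
  define \<alpha> where "\<alpha> = ip e1 f2 / N2"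
  define \<beta> where "\<beta> = ip e1 f3 / N3"
  define f1 where "f1 = e1 - \<alpha> *\<^sub>R f2 - \<beta> *\<^sub>R f3"
  have o12: "ip f1 f2 = 0" using N2 o23 S[of f3 f2] by (simp add: f1_def bl \<alpha>_def N2_def)
  have o13: "ip f1 f3 = 0" using N3 o23 by (simp add: f1_def bl \<beta>_def N3_def)
  define N1 where "N1 = ip f1 f1"
  have N1: "N1 > 0" unfolding N1_def by (rule P)
      (simp add: f1_def f2_def e1_def e2_def f3_def vec_eq_iff forall_3)
  define s2 where "s2 = sqrt (N1 / N2)"
  define s3 where "s3 = sqrt (N1 / N3)"
  have s2: "s2 > 0" "s2 * s2 = N1 / N2" using N1 N2 by (simp_all add: s2_def)
  have s3: "s3 > 0" "s3 * s3 = N1 / N3" using N1 N3 by (simp_all add: s3_def)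
  define x where "x = (\<lambda>i::3. if i = 1 then vector [1, -\<alpha>, \<alpha> * \<tau> - \<beta>] else
     if i = 2 then vector [0, s2, s2 * (-\<tau>)] else vector [0, 0, s3] :: real^3)"
  define lam where "lam = s2 * (-\<tau>) / s3"
  have x1: "x 1 = f1" by (simp add: x_def f1_def f2_def e1_def e2_def f3_def vec_eq_iff forall_3 algebra_simps)
  have x2: "x 2 = s2 *\<^sub>R f2" by (simp add: x_def three_ne f2_def e2_def f3_def vec_eq_iff forall_3 algebra_simps)
  have x3: "x 3 = s3 *\<^sub>R f3" by (simp add: x_def three_ne f3_def vec_eq_iff forall_3)
  define k where "k = 1 / N1"
  have orth: "\<forall>i j. k * ip (x i) (x j) = (if i = j then 1 else 0)"
    unfolding forall_3 x1 x2 x3 using N1 N2 N3 o12 o13 o23 S[of f2 f1] S[of f3 f1] S[of f3 f2] s2 s3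
    by (simp add: three_ne bl k_def N1_def[symmetric] N2_def[symmetric] N3_def[symmetric] field_simps)
  have br12: "r3_bracket a (x 1) (x 2) = x 2 + (lam * (a - 1)) *\<^sub>R x 3"
    using s3 by (simp add: x_def three_ne vec_eq_iff forall_3 br_comp lam_def field_simps)
  have br13: "r3_bracket a (x 1) (x 3) = a *\<^sub>R x 3"
    by (simp add: x_def three_ne vec_eq_iff forall_3 br_comp)
  have br23: "r3_bracket a (x 2) (x 3) = 0"
    by (simp add: x_def three_ne vec_eq_iff forall_3 br_comp)
  have ds: "{M. \<exists>D\<in>derivations (r3_bracket a). matrix_wrt x D M} =
           {M. \<exists>x21 x22 x31 x33.
                 M = vector [vector [0, 0, 0],
                             vector [x21, x22, 0],
                             vector [x31, lam * (x33 - x22), x33]]}"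
    by (rule der_set[OF a1 _ _ x_def lam_def]) (use s2 s3 in auto)
  have "k > 0" using N1 by (simp add: k_def)
  then show ?thesis using orth br12 br13 br23 ds by blast
qed

end
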